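(* Let $\vec p,\vec s$ be $n$-tuples with entries in $[1,\infty]$ and let $\alpha$ satisfy $0\le\frac1n\sum_{i=1}^n\frac1{s_i}\le\frac1\alpha\le\frac1n\sum_{i=1}^n\frac1{p_i}<1$. Then there is a constant $C>0$ such that for every ball $B(x_0,r_0)\subset\mathbb R^n$, $$\|\chi_{B(x_0,r_0)}\|_{(L^{\vec p},L^{\vec s})^{\alpha}}\le C\,r_0^{n/\alpha}\quad\text{and}\quad\|\chi_{B(x_0,r_0)}\|_{\mathcal H(\vec p\,',\vec s\,',\alpha')}\le C\,r_0^{n/\alpha'}.$$
   Context: For $\vec p=(p_1,\dots,p_n)$, $\|f\|_{L^{\vec p}}=\Big(\int_{\mathbb R}\cdots\Big(\int_{\mathbb R}|f(x)|^{p_1}\,dx_1\Big)^{p_2/p_1}\cdots dx_n\Big)^{1/p_n}$ (usual modification when some exponent is $\infty$); primes denote conjugate exponents ($1/p_i+1/p_i'=1$, $1/\alpha+1/\alpha'=1$). $B(y,r)$ is the open ball of center $y$, radius $r$, $\chi_E$ the characteristic function of $E$. $\|f\|_{(L^{\vec p},L^{\vec s})^{\alpha}}:=\sup_{r>0}\Big\|\,y\mapsto |B(y,r)|^{\frac1\alpha-\frac1n\sum_{i}\frac1{p_i}-\frac1n\sum_{i}\frac1{s_i}}\|f\chi_{B(y,r)}\|_{L^{\vec p}}\Big\|_{L^{\vec s}}$ (outer norm in $y$). For $k\in\mathbb Z^n$ let $Q_{1,k}=k+[0,1)^n$, $\|\{a_k\}\|_{\ell^{\vec s}}=\Big(\sum_{k_n}\cdots\Big(\sum_{k_1}|a_k|^{s_1}\Big)^{s_2/s_1}\cdots\Big)^{1/s_n}$,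 and $\|f\|_{\vec p\,',\vec s\,'}=\big\|\{\|f\chi_{Q_{1,k}}\|_{L^{\vec p\,'}}\}_k\big\|_{\ell^{\vec s\,'}}$; $(L^{\vec p\,'},\ell^{\vec s\,'})(\mathbb R^n)$ is the set of $f\in L^1_{loc}$ with $\|f\|_{\vec p\,',\vec s\,'}<\infty$. For $r>0$, $St^{(\alpha')}_rf(x)=r^{-n/\alpha'}f(x/r)$. $\mathcal H(\vec p\,',\vec s\,',\alpha')$ is the set of $f\in L^1_{loc}(\mathbb R^n)$ admitting a sequence $\{(c_j,r_j,f_j)\}_{j\ge1}\subset\mathbb C\times(0,\infty)\times(L^{\vec p\,'},\ell^{\vec s\,'})(\mathbb R^n)$ with $f=\sum_jc_jSt^{(\alpha')}_{r_j}(f_j)$ in $L^1_{loc}$, $\|f_j\|_{\vec p\,',\vec s\,'}\le1$, and $\sum_j|c_j|<\infty$; $\|f\|_{\mathcal H(\vec p\,',\vec s\,',\alpha')}$ is the infimum of $\sum_j|c_j|$ over all such sequences. *)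

theory Defs
  imports "HOL-Analysis.Analysis"
begin

text \<open>Points of R^n are represented as functions nat => real whose coordinates
  0,...,n-1 are x_1,...,x_n and whose coordinates >= n vanish.  Exponents in [1,inf]
  are extended nonnegative reals (ennreal); 1/p is taken in ennreal (1/inf = 0).\<close>

definition Rn :: "nat \<Rightarrow> (nat \<Rightarrow> real) set" where
  "Rn n = {x. \<forall>i\<ge>n. x i = 0}"

definition Zn :: "nat \<Rightarrow> (nat \<Rightarrow> int) set" where
  "Zn n = {k. \<forall>i\<ge>n. k i = 0}"

definition rinv :: "ennreal \<Rightarrow> real" where
  "rinv q = enn2real (inverse q)"

definition conj_exp :: "ennreal \<Rightarrow> ennreal" where
  "conj_exp q = inverse (1 - inverse q)"

definition epow :: "ennreal \<Rightarrow> real \<Rightarrow> ennreal" where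
  "epow x a = (if x = \<infinity> then \<infinity> else ennreal (enn2real x powr a))"

definition ess_sup_enn :: "'a measure \<Rightarrow> ('a \<Rightarrow> ennreal) \<Rightarrow> ennreal" where
  "ess_sup_enn M g = Inf {c. AE t in M. g t \<le> c}"

definition lq_norm :: "'a measure \<Rightarrow> ennreal \<Rightarrow> ('a \<Rightarrow> ennreal) \<Rightarrow> ennreal" where
  "lq_norm M q g = (if q = \<infinity> then ess_sup_enn M g
     else epow (\<integral>\<^sup>+ t. epow (g t) (enn2real q) \<partial>M) (1 / enn2real q))"

text \<open>Iterated (mixed) norm: level k has integrated out the variables 0..k-1,
  variable i with exponent q i, innermost first.\<close>
fun iter_norm :: "'a measure \<Rightarrow> (nat \<Rightarrow> ennreal) \<Rightarrow> nat \<Rightarrow> ((nat \<Rightarrow> 'a) \<Rightarrow> ennreal)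
                    \<Rightarrow> (nat \<Rightarrow> 'a) \<Rightarrow> ennreal" where
  "iter_norm M q 0 g x = g x"
| "iter_norm M q (Suc k) g x = lq_norm M (q k) (\<lambda>t. iter_norm M q k g (x(k := t)))"

definition mixed_Lp_enn :: "nat \<Rightarrow> (nat \<Rightarrow> ennreal) \<Rightarrow> ((nat \<Rightarrow> real) \<Rightarrow> ennreal) \<Rightarrow> ennreal" where
  "mixed_Lp_enn n p g = iter_norm lborel p n g (\<lambda>_. 0)"

definition mixed_Lp_norm :: "nat \<Rightarrow> (nat \<Rightarrow> ennreal) \<Rightarrow> ((nat \<Rightarrow> real) \<Rightarrow> complex) \<Rightarrow> ennreal" where
  "mixed_Lp_norm n p f = mixed_Lp_enn n p (\<lambda>x. ennreal (norm (f x)))"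

definition mixed_lseq_norm :: "nat \<Rightarrow> (nat \<Rightarrow> ennreal) \<Rightarrow> ((nat \<Rightarrow> int) \<Rightarrow> ennreal) \<Rightarrow> ennreal" where
  "mixed_lseq_norm n s a = iter_norm (count_space UNIV) s n a (\<lambda>_. 0)"

text \<open>Lebesgue measure on R^n (via Tonelli as an iterated integral)\<close>
definition vol :: "nat \<Rightarrow> (nat \<Rightarrow> real) set \<Rightarrow> ennreal" where
  "vol n E = mixed_Lp_enn n (\<lambda>_. 1) (indicator E)"

definition balln :: "nat \<Rightarrow> (nat \<Rightarrow> real) \<Rightarrow> real \<Rightarrow> (nat \<Rightarrow> real) set" where
  "balln n y r = {x \<in> Rn n. sqrt (\<Sum>i<n. (x i - y i)\<^sup>2) < r}"

definition cube1 :: "nat \<Rightarrow> (nat \<Rightarrow> int) \<Rightarrow> (nat \<Rightarrow> real) set" where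
  "cube1 n k = {x \<in> Rn n. \<forall>i<n. of_int (k i) \<le> x i \<and> x i < of_int (k i) + 1}"

text \<open>The norm of \<open>(L^p, L^s)^\<alpha>\<close> (outer mixed L^s norm in the centre y)\<close>
definition morrey_norm :: "nat \<Rightarrow> (nat \<Rightarrow> ennreal) \<Rightarrow> (nat \<Rightarrow> ennreal) \<Rightarrow> ennreal
                            \<Rightarrow> ((nat \<Rightarrow> real) \<Rightarrow> complex) \<Rightarrow> ennreal" where
  "morrey_norm n p s \<alpha> f = (SUP r\<in>{0<..}.
     mixed_Lp_enn n s (\<lambda>y.
        ennreal (enn2real (vol n (balln n y r)) powr
            (rinv \<alpha> - (\<Sum>i<n. rinv (p i)) / n - (\<Sum>i<n. rinv (s i)) / n))
        * mixed_Lp_norm n p (\<lambda>x. f x * indicator (balln n y r) x)))"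

text \<open>locally integrable functions on R^n (Lebesgue measurable = Borel measurable
  w.r.t. the product of Lebesgue-Borel measures, plus finite integral on every ball)\<close>
definition loc_int :: "nat \<Rightarrow> ((nat \<Rightarrow> real) \<Rightarrow> complex) \<Rightarrow> bool" where
  "loc_int n f \<longleftrightarrow>
     (\<lambda>x. f (\<lambda>i. if i < n then x i else 0)) \<in> borel_measurable (PiM {..<n} (\<lambda>_. lborel))
   \<and> (\<forall>y r. mixed_Lp_norm n (\<lambda>_. 1) (\<lambda>x. f x * indicator (balln n y r) x) < \<infinity>)"

definition l1loc_tendsto :: "nat \<Rightarrow> (nat \<Rightarrow> (nat \<Rightarrow> real) \<Rightarrow> complex) \<Rightarrow> ((nat \<Rightarrow> real) \<Rightarrow> complex) \<Rightarrow> bool" where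
  "l1loc_tendsto n S f \<longleftrightarrow> (\<forall>y r.
     ((\<lambda>N. mixed_Lp_norm n (\<lambda>_. 1) (\<lambda>x. (S N x - f x) * indicator (balln n y r) x))
        \<longlongrightarrow> 0) sequentially)"

definition amalgam_norm :: "nat \<Rightarrow> (nat \<Rightarrow> ennreal) \<Rightarrow> (nat \<Rightarrow> ennreal)
                             \<Rightarrow> ((nat \<Rightarrow> real) \<Rightarrow> complex) \<Rightarrow> ennreal" where
  "amalgam_norm n p s f =
     mixed_lseq_norm n s (\<lambda>k. mixed_Lp_norm n p (\<lambda>x. f x * indicator (cube1 n k) x))"

definition St :: "nat \<Rightarrow> ennreal \<Rightarrow> real \<Rightarrow> ((nat \<Rightarrow> real) \<Rightarrow> complex) \<Rightarrow> (nat \<Rightarrow> real) \<Rightarrow> complex" where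
  "St n a r f x = complex_of_real (r powr (- (real n * rinv a))) * f (\<lambda>i. x i / r)"

text \<open>norm of \<open>\<H>(p, s, a)\<close> (infimum over admissible decompositions; \<infinity> if none)\<close>
definition H_norm :: "nat \<Rightarrow> (nat \<Rightarrow> ennreal) \<Rightarrow> (nat \<Rightarrow> ennreal) \<Rightarrow> ennreal
                       \<Rightarrow> ((nat \<Rightarrow> real) \<Rightarrow> complex) \<Rightarrow> ennreal" where
  "H_norm n p s a f = Inf {ennreal (\<Sum>j. norm (c j)) | c r g.
      summable (\<lambda>j. norm (c j))
    \<and> (\<forall>j. 0 < r j \<and> loc_int n (g j) \<and> amalgam_norm n p s (g j) \<le> 1)
    \<and> l1loc_tendsto n (\<lambda>N x. \<Sum>j<N. c j * St n a (r j) (g j) x) f}"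

end

theory Submission
  imports Defs
begin

lemma epow_zero[simp]: "epow 0 a = 0"
  by (simp add: epow_def)

lemma epow_one: "epow y 1 = y"
  by (cases y) (auto simp: epow_def)

lemma epow_ennreal: "0 \<le> b \<Longrightarrow> epow (ennreal b) a = ennreal (b powr a)"
  by (simp add: epow_def)

lemma lq_norm_zero: "lq_norm M q (\<lambda>_. 0) = 0"
proof (cases "q = \<infinity>")
  case True
  have "0 \<in> {c. AE t in M. (0::ennreal) \<le> c}" by simp
  then have "ess_sup_enn M (\<lambda>_. 0) \<le> 0" unfolding ess_sup_enn_def by (rule Inf_lower)
  then show ?thesis using True by (simp add: lq_norm_def)
next
  case False
  then show ?thesis by (simp add: lq_norm_def)
qed

lemma iter_zero: "iter_norm M q k (\<lambda>_. 0) x = 0"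
  by (induction k arbitrary: x) (simp_all add: lq_norm_zero)

lemma lq_norm_one: "lq_norm M 1 h = nn_integral M h"
  by (simp add: lq_norm_def epow_one)

lemma rinv_inf[simp]: "rinv \<infinity> = 0"
  by (simp add: rinv_def)

lemma rinv_fin: "rinv q = 1 / enn2real q" if qf: "q \<noteq> \<infinity>"
proof -
  obtain r where r: "q = ennreal r" "0 \<le> r" using qf by (cases q rule: ennreal_cases) auto
  then show ?thesis
    by (cases "r = 0") (auto simp: rinv_def inverse_ennreal divide_inverse)
qed

lemma lq_norm_bound:
  fixes h :: "'a \<Rightarrow> ennreal"
  assumes q: "1 \<le> q" and As: "A \<in> sets M" and L: "0 < L" "emeasure M A \<le> ennreal L"
    and B: "0 \<le> B" and hb: "\<And>t. h t \<le> ennreal B" and hs: "\<And>t. h t \<noteq> 0 \<Longrightarrow> t \<in> A"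
  shows "lq_norm M q h \<le> ennreal (B * L powr rinv q)"
proof (cases "q = \<infinity>")
  case True
  have "ennreal B \<in> {c. AE t in M. h t \<le> c}" using hb by simp
  then have "ess_sup_enn M h \<le> ennreal B" unfolding ess_sup_enn_def by (rule Inf_lower)
  then show ?thesis using True L by (simp add: lq_norm_def rinv_def)
next
  case False
  define Q where "Q = enn2real q"
  have Q1: "1 \<le> Q" using q False unfolding Q_def
    by (cases q rule: ennreal_cases) auto
  have rq: "rinv q = 1 / Q" using rinv_fin[OF False] Q_def by simp
  have pt: "epow (h t) Q \<le> ennreal (B powr Q) * indicator A t" for t
  proof (cases "h t = 0")
    case True then show ?thesis by simp
  next
    case nz: False
    then have tA: "t \<in> A" by (rule hs)
    have hfin: "h t \<noteq> \<infinity>" using hb[of t] by (auto simp: top_unique)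
    have "enn2real (h t) \<le> B" using hb[of t] B
      by (simp add: enn2real_leI)
    then have "enn2real (h t) powr Q \<le> B powr Q"
      using Q1 by (intro powr_mono2) auto
    then show ?thesis using tA hfin by (simp add: epow_def)
  qed
  have "(\<integral>\<^sup>+ t. epow (h t) Q \<partial>M) \<le> (\<integral>\<^sup>+ t. ennreal (B powr Q) * indicator A t \<partial>M)"
    by (rule nn_integral_mono) (rule pt)
  also have "\<dots> = ennreal (B powr Q) * emeasure M A"
    using As by (rule nn_integral_cmult_indicator)
  also have "\<dots> \<le> ennreal (B powr Q) * ennreal L"
    using L by (intro mult_left_mono) auto
  also have "\<dots> = ennreal (B powr Q * L)" using L by (simp add: ennreal_mult)
  finally have I: "(\<integral>\<^sup>+ t. epow (h t) Q \<partial>M) \<le> ennreal (B powr Q * L)" .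
  then have Ifin: "(\<integral>\<^sup>+ t. epow (h t) Q \<partial>M) \<noteq> \<infinity>" by (auto simp: top_unique)
  have "enn2real (\<integral>\<^sup>+ t. epow (h t) Q \<partial>M) \<le> B powr Q * L"
    using I L B by (simp add: enn2real_leI)
  then have "enn2real (\<integral>\<^sup>+ t. epow (h t) Q \<partial>M) powr (1 / Q) \<le> (B powr Q * L) powr (1 / Q)"
    using Q1 by (intro powr_mono2) auto
  also have "\<dots> = B * L powr (1 / Q)"
    using B L Q1 by (simp add: powr_mult powr_powr)
  finally have "ennreal (enn2real (\<integral>\<^sup>+ t. epow (h t) Q \<partial>M) powr (1 / Q)) \<le> ennreal (B * L powr (1 / Q))"
    by (rule ennreal_leI)
  then show ?thesis using False Ifin rq
    by (simp add: lq_norm_def epow_def Q_def)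
qed

lemma iter_upper:
  fixes M :: "'a measure" and g :: "(nat \<Rightarrow> 'a) \<Rightarrow> ennreal"
  assumes q: "\<forall>i<n. 1 \<le> q i" and A: "\<forall>i<n. A i \<in> sets M"
    and L: "\<forall>i<n. 0 < L i \<and> emeasure M (A i) \<le> ennreal (L i)"
    and b: "0 \<le> b" and gb: "\<forall>x. g x \<le> ennreal b"
    and gs: "\<forall>x. g x \<noteq> 0 \<longrightarrow> (\<forall>i<n. x i \<in> A i)"
  shows "k \<le> n \<Longrightarrow> (\<forall>x. iter_norm M q k g x \<le> ennreal (b * (\<Prod>i<k. L i powr rinv (q i))))
     \<and> (\<forall>x. iter_norm M q k g x \<noteq> 0 \<longrightarrow> (\<forall>i. k \<le> i \<and> i < n \<longrightarrow> x i \<in> A i))"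
proof (induction k)
  case 0
  then show ?case using gb gs by simp
next
  case (Suc k)
  then have kn: "k < n" and IH1: "\<And>x. iter_norm M q k g x \<le> ennreal (b * (\<Prod>i<k. L i powr rinv (q i)))"
    and IH2: "\<And>x. iter_norm M q k g x \<noteq> 0 \<Longrightarrow> (\<forall>i. k \<le> i \<and> i < n \<longrightarrow> x i \<in> A i)"
    by auto
  define B where "B = b * (\<Prod>i<k. L i powr rinv (q i))"
  have B0: "0 \<le> B" unfolding B_def using b by (intro mult_nonneg_nonneg prod_nonneg) auto
  have bnd: "iter_norm M q (Suc k) g x \<le> ennreal (B * L k powr rinv (q k))" for x
    unfolding iter_norm.simps
  proof (rule lq_norm_bound[where A="A k"])
    show "1 \<le> q k" "A k \<in> sets M" "0 < L k" "emeasure M (A k) \<le> ennreal (L k)"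
      using q A L kn by auto
    show "0 \<le> B" by (rule B0)
    show "iter_norm M q k g (x(k := t)) \<le> ennreal B" for t using IH1 B_def by simp
    show "t \<in> A k" if "iter_norm M q k g (x(k := t)) \<noteq> 0" for t
      using IH2[OF that] kn by auto
  qed
  have sup: "\<forall>i. Suc k \<le> i \<and> i < n \<longrightarrow> x i \<in> A i" if nz: "iter_norm M q (Suc k) g x \<noteq> 0" for x
  proof (rule ccontr)
    assume "\<not> ?thesis"
    then obtain j where j: "Suc k \<le> j" "j < n" "x j \<notin> A j" by auto
    have "iter_norm M q k g (x(k := t)) = 0" for t
    proof (rule ccontr)
      assume "iter_norm M q k g (x(k := t)) \<noteq> 0"
      from IH2[OF this] j have "(x(k := t)) j \<in> A j" by (meson Suc_leD)
      with j show False by auto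
    qed
    then have "iter_norm M q (Suc k) g x = 0"
      by (simp add: lq_norm_zero)
    with nz show False by simp
  qed
  show ?case using bnd sup by (simp add: B_def lessThan_Suc mult_ac)
qed

lemma iter_lower:
  fixes g :: "(nat \<Rightarrow> real) \<Rightarrow> ennreal" and c :: ennreal
  assumes A: "\<forall>i<n. A i \<in> sets lborel" and g: "\<forall>x\<in>Rn n. (\<forall>i<n. x i \<in> A i) \<longrightarrow> c \<le> g x"
  shows "k \<le> n \<Longrightarrow> \<forall>x\<in>Rn n. (\<forall>i. k \<le> i \<and> i < n \<longrightarrow> x i \<in> A i) \<longrightarrow>
     c * (\<Prod>i<k. emeasure lborel (A i)) \<le> iter_norm lborel (\<lambda>_. 1) k g x"
proof (induction k)
  case 0
  then show ?case using g by simp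
next
  case (Suc k)
  then have kn: "k < n" and IH: "\<And>x. x \<in> Rn n \<Longrightarrow> (\<forall>i. k \<le> i \<and> i < n \<longrightarrow> x i \<in> A i) \<Longrightarrow>
     c * (\<Prod>i<k. emeasure lborel (A i)) \<le> iter_norm lborel (\<lambda>_. 1) k g x"
    by auto
  show ?case
  proof (intro ballI impI)
    fix x assume x: "x \<in> Rn n" and xa: "\<forall>i. Suc k \<le> i \<and> i < n \<longrightarrow> x i \<in> A i"
    have pt: "c * (\<Prod>i<k. emeasure lborel (A i)) * indicator (A k) t \<le> iter_norm lborel (\<lambda>_. 1) k g (x(k := t))" for t
    proof (cases "t \<in> A k")
      case True
      have "x(k := t) \<in> Rn n" using x kn by (auto simp: Rn_def)
      moreover have "\<forall>i. k \<le> i \<and> i < n \<longrightarrow> (x(k := t)) i \<in> A i"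
        using xa True by (metis Suc_leI fun_upd_apply le_neq_implies_less)
      ultimately show ?thesis using IH True by simp
    qed simp
    have "c * (\<Prod>i<Suc k. emeasure lborel (A i)) = c * (\<Prod>i<k. emeasure lborel (A i)) * emeasure lborel (A k)"
      by (simp add: mult.assoc)
    also have "\<dots> = (\<integral>\<^sup>+ t. c * (\<Prod>i<k. emeasure lborel (A i)) * indicator (A k) t \<partial>lborel)"
      using A kn by (simp add: nn_integral_cmult_indicator)
    also have "\<dots> \<le> (\<integral>\<^sup>+ t. iter_norm lborel (\<lambda>_. 1) k g (x(k := t)) \<partial>lborel)"
      by (rule nn_integral_mono) (rule pt)
    also have "\<dots> = iter_norm lborel (\<lambda>_. 1) (Suc k) g x"
      by (simp add: lq_norm_one)
    finally show "c * (\<Prod>i<Suc k. emeasure lborel (A i)) \<le> iter_norm lborel (\<lambda>_. 1) (Suc k) g x" .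
  qed
qed

lemma ball_coord: "x \<in> balln n y r \<Longrightarrow> i < n \<Longrightarrow> \<bar>x i - y i\<bar> < r"
proof -
  assume x: "x \<in> balln n y r" and i: "i < n"
  have "(x i - y i)\<^sup>2 \<le> (\<Sum>j<n. (x j - y j)\<^sup>2)"
    using i by (intro member_le_sum) auto
  then have "sqrt ((x i - y i)\<^sup>2) \<le> sqrt (\<Sum>j<n. (x j - y j)\<^sup>2)"
    by (rule real_sqrt_le_mono)
  then show ?thesis using x by (auto simp: balln_def)
qed

lemma ball_contains:
  assumes n: "1 \<le> n" and x: "x \<in> Rn n" and r: "0 < r" and c: "\<forall>i<n. \<bar>x i - y i\<bar> < r / n"
  shows "x \<in> balln n y r"
proof -
  have "(\<Sum>j<n. (x j - y j)\<^sup>2) < (\<Sum>j<n. (r / n)\<^sup>2)"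
  proof (rule sum_strict_mono)
    show "finite {..<n}" by simp
    have "0 \<in> {..<n}" using n by simp
    then show "{..<n} \<noteq> {}" by blast
    fix j assume "j \<in> {..<n}"
    then have "\<bar>x j - y j\<bar> < r / n" using c by auto
    then have "\<bar>x j - y j\<bar>\<^sup>2 < (r / n)\<^sup>2"
      by (intro power_strict_mono) auto
    then show "(x j - y j)\<^sup>2 < (r / n)\<^sup>2" by simp
  qed
  also have "\<dots> = r\<^sup>2 / n" using n by (simp add: power2_eq_square)
  also have "\<dots> \<le> r\<^sup>2" using n by (simp add: divide_le_eq mult_le_cancel_left1)
  finally have "sqrt (\<Sum>j<n. (x j - y j)\<^sup>2) < sqrt (r\<^sup>2)" by (simp only: real_sqrt_less_iff)
  then show ?thesis using x r by (simp add: balln_def)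
qed

lemma rinv_one[simp]: "rinv 1 = 1"
  by (simp add: rinv_def)

lemma vol_fin: "vol n (balln n y r) \<noteq> \<infinity>" if r: "0 < r"
proof -
  have h1: "\<forall>x. indicator (balln n y r) x \<le> ennreal 1" by (auto simp: indicator_def)
  have h2: "\<forall>x. indicator (balln n y r) x \<noteq> (0::ennreal) \<longrightarrow> (\<forall>i<n. x i \<in> {y i - r..y i + r})"
  proof (intro allI impI)
    fix x i assume "indicator (balln n y r) x \<noteq> (0::ennreal)" "i < n"
    then have "\<bar>x i - y i\<bar> < r" by (intro ball_coord) (auto simp: indicator_def split: if_splits)
    then show "x i \<in> {y i - r..y i + r}" by auto
  qed
  have "(\<forall>x. iter_norm lborel (\<lambda>_. 1) n (indicator (balln n y r)) x \<le> ennreal (1 * (\<Prod>i<n. (2*r) powr rinv ((\<lambda>_. 1::ennreal) i))))"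
    using iter_upper[of n "\<lambda>_. 1" "\<lambda>i. {y i - r .. y i + r}" lborel "\<lambda>_. 2 * r" 1 "indicator (balln n y r)" n, OF _ _ _ _ h1 h2] r
    by (simp only: order_refl simp_thms) simp
  then have "iter_norm lborel (\<lambda>_. 1) n (indicator (balln n y r)) (\<lambda>_. 0) \<le> ennreal (1 * (\<Prod>i<n. (2*r) powr rinv ((\<lambda>_. 1::ennreal) i)))"
    by (rule spec)
  then show ?thesis unfolding vol_def mixed_Lp_enn_def
    using neq_top_trans[OF ennreal_neq_top] by fastforce
qed

lemma vol_low: "ennreal ((2 * r / n) ^ n) \<le> vol n (balln n y r)" if n: "1 \<le> n" and r: "0 < r"
proof -
  have "\<forall>x\<in>Rn n. (\<forall>i. n \<le> i \<and> i < n \<longrightarrow> x i \<in> {y i - r/n <..< y i + r/n}) \<longrightarrow>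
     1 * (\<Prod>i<n. emeasure lborel {y i - r/n <..< y i + r/n}) \<le> iter_norm lborel (\<lambda>_. 1) n (indicator (balln n y r)) x"
    by (rule iter_lower) (auto simp: indicator_def abs_less_iff intro!: ball_contains[OF n _ r])
  moreover have "(\<lambda>_. 0) \<in> Rn n" by (simp add: Rn_def)
  ultimately have "(\<Prod>i<n. emeasure lborel {y i - r/n <..< y i + r/n}) \<le> vol n (balln n y r)"
    unfolding vol_def mixed_Lp_enn_def by auto
  moreover have "(\<Prod>i<n. emeasure lborel {y i - r/n <..< y i + r/n}) = ennreal ((2 * r / n) ^ n)"
  proof -
    have e: "emeasure lborel {y i - r/n <..< y i + r/n} = ennreal (2 * r / n)" for i
    proof -
      have "y i - r/n \<le> y i + r/n" using r by (simp add: field_simps)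
      then have "emeasure lborel {y i - r/n <..< y i + r/n} = ennreal (y i + r/n - (y i - r/n))"
        by (rule emeasure_lborel_Ioo)
      also have "y i + r/n - (y i - r/n) = 2 * r / n" by (simp add: field_simps)
      finally show ?thesis .
    qed
    have "(\<Prod>i<n. emeasure lborel {y i - r/n <..< y i + r/n}) = (\<Prod>i<n. ennreal (2 * r / n))"
      by (simp only: e)
    also have "\<dots> = ennreal (2 * r / n) ^ n" by simp
    also have "\<dots> = ennreal ((2 * r / n) ^ n)" using r by (simp add: ennreal_power)
    finally show ?thesis .
  qed
  ultimately show ?thesis by (simp only:)
qed

lemma vol_pow:
  assumes n: "1 \<le> n" and r: "0 < r" and e: "e \<le> 0"
  shows "enn2real (vol n (balln n y r)) powr e \<le> (2 * r / n) powr (n * e)"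
proof -
  have pos: "0 < (2 * r / n) ^ n" using n r by simp
  have "(2 * r / n) ^ n \<le> enn2real (vol n (balln n y r))"
  proof -
    have "enn2real (ennreal ((2 * r / n) ^ n)) \<le> enn2real (vol n (balln n y r))"
      using vol_low[OF n r, of y] vol_fin[OF r, of n y]
      by (intro enn2real_mono) (auto simp: top.not_eq_extremum)
    then show ?thesis using pos by simp
  qed
  then have "enn2real (vol n (balln n y r)) powr e \<le> ((2 * r / n) ^ n) powr e"
    using pos e by (intro powr_mono2') auto
  also have "\<dots> = (2 * r / n) powr (n * e)"
    using r n by (simp add: powr_realpow[symmetric] powr_powr)
  finally show ?thesis .
qed

lemma real_ineq:
  fixes r r0 N A SP SS :: real
  assumes r: "0 < r" and r0: "0 < r0" and N: "0 < N" and SS: "0 \<le> SS" and SP: "0 \<le> SP"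
    and A1: "SS \<le> A" and A2: "A \<le> SP"
  shows "(2*r/N) powr (A - SP - SS) * (2*min r r0) powr SP * (2*(r+r0)) powr SS
     \<le> (2/N) powr (A - SP - SS) * 2 powr SP * 4 powr SS * r0 powr A"
proof -
  define E where "E = A - SP - SS"
  define c where "c = (2/N) powr E"
  have c0: "0 \<le> c" unfolding c_def by simp
  have e1: "(2*r/N) powr E = c * r powr E"
    unfolding c_def using r N by (simp add: powr_mult[symmetric])
  show ?thesis
  proof (cases "r \<le> r0")
    case True
    then have m: "min r r0 = r" by simp
    have "(2*(r+r0)) powr SS \<le> (4*r0) powr SS"
      using True r r0 SS by (intro powr_mono2) auto
    also have "\<dots> = 4 powr SS * r0 powr SS" using r0 by (simp add: powr_mult)
    finally have s1: "(2*(r+r0)) powr SS \<le> 4 powr SS * r0 powr SS" .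
    have "r powr E * r powr SP = r powr (A - SS)"
      unfolding E_def by (simp add: powr_add[symmetric])
    also have "\<dots> \<le> r0 powr (A - SS)" using True r A1 by (intro powr_mono2) auto
    finally have s2: "r powr E * r powr SP \<le> r0 powr (A - SS)" .
    have "(2*r/N) powr E * (2*min r r0) powr SP * (2*(r+r0)) powr SS
        = c * 2 powr SP * (r powr E * r powr SP) * (2*(r+r0)) powr SS"
    proof -
      have e2: "(2*min r r0) powr SP = 2 powr SP * r powr SP" using r m by (simp add: powr_mult)
      show ?thesis unfolding e1 e2 by (simp add: mult_ac)
    qed
    also have "\<dots> \<le> c * 2 powr SP * r0 powr (A - SS) * (4 powr SS * r0 powr SS)"
      using s1 s2 c0 by (intro mult_mono) auto
    also have "\<dots> = c * 2 powr SP * 4 powr SS * (r0 powr (A - SS) * r0 powr SS)"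
      by (simp add: mult_ac)
    also have "r0 powr (A - SS) * r0 powr SS = r0 powr A" by (simp add: powr_add[symmetric])
    finally show ?thesis unfolding E_def c_def .
  next
    case False
    then have m: "min r r0 = r0" by simp
    have "(2*(r+r0)) powr SS \<le> (4*r) powr SS"
      using False r r0 SS by (intro powr_mono2) auto
    also have "\<dots> = 4 powr SS * r powr SS" using r by (simp add: powr_mult)
    finally have s1: "(2*(r+r0)) powr SS \<le> 4 powr SS * r powr SS" .
    have "r powr E * r powr SS = r powr (A - SP)"
      unfolding E_def by (simp add: powr_add[symmetric])
    also have "\<dots> \<le> r0 powr (A - SP)" using False r0 A2 by (intro powr_mono2') auto
    finally have s2: "r powr E * r powr SS \<le> r0 powr (A - SP)" .
    have "(2*r/N) powr E * (2*min r r0) powr SP * (2*(r+r0)) powr SS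
        \<le> c * r powr E * (2 powr SP * r0 powr SP) * (4 powr SS * r powr SS)"
    proof -
      have e2: "(2*min r r0) powr SP = 2 powr SP * r0 powr SP" using r0 m by (simp add: powr_mult)
      show ?thesis unfolding e1 e2 using s1 c0 by (intro mult_left_mono) auto
    qed
    also have "\<dots> = c * 2 powr SP * 4 powr SS * r0 powr SP * (r powr E * r powr SS)"
      by (simp add: mult_ac)
    also have "\<dots> \<le> c * 2 powr SP * 4 powr SS * r0 powr SP * r0 powr (A - SP)"
      using s2 c0 by (intro mult_left_mono) auto
    also have "\<dots> = c * 2 powr SP * 4 powr SS * (r0 powr (A - SP) * r0 powr SP)"
      by (simp add: mult_ac)
    also have "r0 powr (A - SP) * r0 powr SP = r0 powr A" by (simp add: powr_add[symmetric])
    finally show ?thesis unfolding E_def c_def .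
  qed
qed

lemma norm_bound:
  fixes f :: "(nat \<Rightarrow> real) \<Rightarrow> complex"
  assumes q: "\<forall>i<n. 1 \<le> q i" and rho: "0 < \<rho>" and b: "0 \<le> b"
    and fb: "\<forall>x. norm (f x) \<le> b"
    and fs: "\<forall>x. f x \<noteq> 0 \<longrightarrow> (\<forall>i<n. \<bar>x i - z i\<bar> \<le> \<rho>)"
  shows "mixed_Lp_norm n q f \<le> ennreal (b * (2 * \<rho>) powr (\<Sum>i<n. rinv (q i)))"
proof -
  have h1: "\<forall>x. ennreal (norm (f x)) \<le> ennreal b" using fb by (auto intro: ennreal_leI)
  have h2: "\<forall>x. ennreal (norm (f x)) \<noteq> 0 \<longrightarrow> (\<forall>i<n. x i \<in> {z i - \<rho> .. z i + \<rho>})"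
  proof (intro allI impI)
    fix x i assume "ennreal (norm (f x)) \<noteq> 0" "i < n"
    then have "f x \<noteq> 0" by auto
    with fs \<open>i < n\<close> have "\<bar>x i - z i\<bar> \<le> \<rho>" by auto
    then show "x i \<in> {z i - \<rho> .. z i + \<rho>}" by auto
  qed
  have L: "\<forall>i<n. 0 < 2 * \<rho> \<and> emeasure lborel {z i - \<rho> .. z i + \<rho>} \<le> ennreal (2 * \<rho>)"
    using rho by simp
  have "\<forall>x. iter_norm lborel q n (\<lambda>x. ennreal (norm (f x))) x \<le> ennreal (b * (\<Prod>i<n. (2 * \<rho>) powr rinv (q i)))"
    using iter_upper[of n q "\<lambda>i. {z i - \<rho> .. z i + \<rho>}" lborel "\<lambda>_. 2 * \<rho>" b "\<lambda>x. ennreal (norm (f x))" n,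
       OF q _ L b h1 h2] by simp
  moreover have "(\<Prod>i<n. (2 * \<rho>) powr rinv (q i)) = (2 * \<rho>) powr (\<Sum>i<n. rinv (q i))"
    using rho by (simp add: powr_sum)
  ultimately show ?thesis unfolding mixed_Lp_norm_def mixed_Lp_enn_def by simp
qed

lemma rinv_nonneg: "0 \<le> rinv q" by (simp add: rinv_def)

lemma morrey_bound:
  fixes x0 :: "nat \<Rightarrow> real"
  assumes n: "1 \<le> n" and p: "\<forall>i<n. 1 \<le> p i" and s: "\<forall>i<n. 1 \<le> s i" and r0: "0 < r0"
    and c1: "(\<Sum>i<n. rinv (s i)) / n \<le> rinv \<alpha>" and c2: "rinv \<alpha> \<le> (\<Sum>i<n. rinv (p i)) / n"
  shows "morrey_norm n p s \<alpha> (indicator (balln n x0 r0)) \<le>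
    ennreal ((2/n) powr (n * rinv \<alpha> - (\<Sum>i<n. rinv (p i)) - (\<Sum>i<n. rinv (s i))) * 2 powr (\<Sum>i<n. rinv (p i))
       * 4 powr (\<Sum>i<n. rinv (s i)) * r0 powr (n * rinv \<alpha>))"
proof -
  define SP where "SP = (\<Sum>i<n. rinv (p i))"
  define SS where "SS = (\<Sum>i<n. rinv (s i))"
  define a where "a = rinv \<alpha>"
  have npos: "0 < real n" using n by simp
  have SP0: "0 \<le> SP" unfolding SP_def by (intro sum_nonneg) (simp add: rinv_nonneg)
  have SS0: "0 \<le> SS" unfolding SS_def by (intro sum_nonneg) (simp add: rinv_nonneg)
  have A1: "SS \<le> n * a" using c1 npos unfolding SS_def a_def by (simp add: divide_le_eq mult.commute)
  have A2: "n * a \<le> SP" using c2 npos unfolding SP_def a_def by (simp add: le_divide_eq mult.commute)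
  show ?thesis
    unfolding morrey_norm_def SP_def[symmetric] SS_def[symmetric] a_def[symmetric]
  proof (rule SUP_least)
    fix r :: real assume "r \<in> {0<..}"
    then have r: "0 < r" by simp
    define e where "e = a - SP / n - SS / n"
    have ne: "n * e = n * a - SP - SS" unfolding e_def using npos by (simp add: field_simps)
    have e0: "e \<le> 0"
    proof -
      have "a \<le> SP / n" using c2 unfolding a_def SP_def .
      moreover have "0 \<le> SS / n" using SS0 by simp
      ultimately show ?thesis unfolding e_def by linarith
    qed
    define m where "m = min r r0"
    have m0: "0 < m" using r r0 by (simp add: m_def)
    define K where "K = (2*r/n) powr (n*e) * (2 * m) powr SP"
    have K0: "0 \<le> K" by (simp add: K_def)
    define F where "F = (\<lambda>y. ennreal (enn2real (vol n (balln n y r)) powr e)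
        * mixed_Lp_norm n p (\<lambda>x. indicator (balln n x0 r0) x * indicator (balln n y r) x))"
    have Fb: "\<forall>y. F y \<le> ennreal K"
    proof
      fix y
      define z where "z = (if r \<le> r0 then y else x0)"
      have G: "mixed_Lp_norm n p (\<lambda>x. indicator (balln n x0 r0) x * indicator (balln n y r) x) \<le> ennreal (1 * (2 * m) powr SP)"
        unfolding SP_def
      proof (rule norm_bound[OF p m0])
        show "0 \<le> (1::real)" by simp
        show "\<forall>x. norm (indicator (balln n x0 r0) x * indicator (balln n y r) x :: complex) \<le> 1"
          by (simp add: indicator_def)
        show "\<forall>x. (indicator (balln n x0 r0) x * indicator (balln n y r) x :: complex) \<noteq> 0 \<longrightarrow> (\<forall>i<n. \<bar>x i - z i\<bar> \<le> m)"
        proof (intro allI impI)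
          fix x i assume nz: "(indicator (balln n x0 r0) x * indicator (balln n y r) x :: complex) \<noteq> 0" and i: "i < n"
          then have "x \<in> balln n x0 r0" "x \<in> balln n y r" by (auto simp: indicator_def split: if_splits)
          then have "\<bar>x i - x0 i\<bar> < r0" "\<bar>x i - y i\<bar> < r" using i by (auto intro: ball_coord)
          then show "\<bar>x i - z i\<bar> \<le> m" unfolding z_def m_def by auto
        qed
      qed
      have V: "enn2real (vol n (balln n y r)) powr e \<le> (2*r/n) powr (n*e)"
        by (rule vol_pow[OF n r e0])
      have "F y \<le> ennreal ((2*r/n) powr (n*e)) * ennreal ((2 * m) powr SP)"
        unfolding F_def using G V by (intro mult_mono) (auto intro: ennreal_leI)
      also have "\<dots> = ennreal K" unfolding K_def by (simp add: ennreal_mult)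
      finally show "F y \<le> ennreal K" .
    qed
    have Fs: "\<forall>y. F y \<noteq> 0 \<longrightarrow> (\<forall>i<n. y i \<in> {x0 i - (r + r0) .. x0 i + (r + r0)})"
    proof (intro allI impI)
      fix y i assume nz: "F y \<noteq> 0" and i: "i < n"
      show "y i \<in> {x0 i - (r + r0) .. x0 i + (r + r0)}"
      proof (rule ccontr)
        assume out: "y i \<notin> {x0 i - (r + r0) .. x0 i + (r + r0)}"
        have Z: "(indicator (balln n x0 r0) x * indicator (balln n y r) x :: complex) = 0" for x
        proof -
          show "(indicator (balln n x0 r0) x * indicator (balln n y r) x :: complex) = 0"
          proof (rule ccontr)
            assume "(indicator (balln n x0 r0) x * indicator (balln n y r) x :: complex) \<noteq> 0"
            then have "x \<in> balln n x0 r0" "x \<in> balln n y r" by (auto simp: indicator_def split: if_splits)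
            then have "\<bar>x i - x0 i\<bar> < r0" "\<bar>x i - y i\<bar> < r" using i by (auto intro: ball_coord)
            with out show False by auto
          qed
        qed
        have "F y = 0" unfolding F_def mixed_Lp_norm_def mixed_Lp_enn_def
          by (simp add: Z iter_zero)
        with nz show False by simp
      qed
    qed
    have L: "\<forall>i<n. 0 < 2 * (r + r0) \<and> emeasure lborel {x0 i - (r + r0) .. x0 i + (r + r0)} \<le> ennreal (2 * (r + r0))"
      using r r0 by simp
    have "\<forall>y. iter_norm lborel s n F y \<le> ennreal (K * (\<Prod>i<n. (2 * (r + r0)) powr rinv (s i)))"
      using iter_upper[of n s "\<lambda>i. {x0 i - (r + r0) .. x0 i + (r + r0)}" lborel "\<lambda>_. 2 * (r + r0)" K F n,
        OF s _ L K0 Fb Fs] by simp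
    moreover have "(\<Prod>i<n. (2 * (r + r0)) powr rinv (s i)) = (2 * (r + r0)) powr SS"
      using r r0 unfolding SS_def by (simp add: powr_sum)
    ultimately have "mixed_Lp_enn n s F \<le> ennreal (K * (2 * (r + r0)) powr SS)"
      unfolding mixed_Lp_enn_def by simp
    also have "K * (2 * (r + r0)) powr SS \<le> (2/n) powr (n * a - SP - SS) * 2 powr SP * 4 powr SS * r0 powr (n * a)"
      unfolding K_def ne m_def using real_ineq[OF r r0 npos SS0 SP0 A1 A2] .
    finally show "mixed_Lp_enn n s (\<lambda>y. ennreal (enn2real (vol n (balln n y r)) powr (a - SP / n - SS / n))
        * mixed_Lp_norm n p (\<lambda>x. indicator (balln n x0 r0) x * indicator (balln n y r) x))
      \<le> ennreal ((2/n) powr (n * a - SP - SS) * 2 powr SP * 4 powr SS * r0 powr (n * a))"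
      unfolding F_def e_def by (simp add: ennreal_leI)
  qed
qed

lemma conj_exp_ge1: "1 \<le> conj_exp q"
  unfolding conj_exp_def
  by (metis (no_types, lifting) diff_le_self_ennreal divide_ennreal_def
    divide_right_mono_ennreal dual_order.strict_trans2 ennreal_divide_self
    ennreal_inverse_positive ennreal_one_less_top leD mult_1
    one_divide_one_divide_ennreal top_greatest)

lemma ball_scale:
  assumes r0: "0 < r0"
  shows "((\<lambda>i. x i / r0) \<in> balln n (\<lambda>i. x0 i / r0) 1) = (x \<in> balln n x0 r0)"
proof -
  have rn: "((\<lambda>i. x i / r0) \<in> Rn n) = (x \<in> Rn n)" using r0 by (simp add: Rn_def)
  have "(\<Sum>i<n. (x i / r0 - x0 i / r0)\<^sup>2) = (\<Sum>i<n. (x i - x0 i)\<^sup>2) / r0\<^sup>2"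
    by (simp add: sum_divide_distrib diff_divide_distrib[symmetric] power_divide)
  then have "sqrt (\<Sum>i<n. (x i / r0 - x0 i / r0)\<^sup>2) = sqrt (\<Sum>i<n. (x i - x0 i)\<^sup>2) / r0"
    using r0 by (simp add: real_sqrt_divide)
  then have "(sqrt (\<Sum>i<n. (x i / r0 - x0 i / r0)\<^sup>2) < 1) = (sqrt (\<Sum>i<n. (x i - x0 i)\<^sup>2) < r0)"
    using r0 by (simp add: divide_less_eq)
  with rn show ?thesis by (simp add: balln_def)
qed

lemma H_bound:
  fixes x0 :: "nat \<Rightarrow> real" and pp ss :: "nat \<Rightarrow> ennreal" and a :: ennreal
  assumes n: "1 \<le> n" and pp: "\<forall>i<n. 1 \<le> pp i" and ss: "\<forall>i<n. 1 \<le> ss i" and r0: "0 < r0"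
  shows "H_norm n pp ss a (indicator (balln n x0 r0)) \<le>
    ennreal ((\<Prod>i<n. 3 powr rinv (ss i)) * r0 powr (real n * rinv a))"
proof -
  define K where "K = (\<Prod>i<n. (3::real) powr rinv (ss i))"
  have K0: "0 < K" unfolding K_def by (intro prod_pos) auto
  define z where "z = (\<lambda>i. x0 i / r0)"
  define g where "g = (\<lambda>x. complex_of_real (1 / K) * indicator (balln n z 1) x)"
  define C0 where "C0 = K * r0 powr (real n * rinv a)"
  have C00: "0 \<le> C0" unfolding C0_def using K0 by simp
  define c where "c = (\<lambda>j::nat. if j = 0 then complex_of_real C0 else 0)"
  have cn: "(\<lambda>j. norm (c j)) = (\<lambda>j. if j = 0 then C0 else 0)"
    using C00 by (auto simp: c_def fun_eq_iff)
  have csums: "(\<lambda>j. norm (c j)) sums C0"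
    unfolding cn using sums_single[of 0 "\<lambda>_. C0"] by simp
  have gb: "\<forall>x. norm (g x) \<le> 1 / K"
  proof
    fix x
    have "norm (g x) = \<bar>1 / K\<bar> * norm (indicator (balln n z 1) x :: complex)"
      unfolding g_def norm_mult norm_of_real by simp
    also have "\<dots> \<le> 1 / K" using K0 by (simp add: indicator_def)
    finally show "norm (g x) \<le> 1 / K" .
  qed
  have gs: "\<forall>x. g x \<noteq> 0 \<longrightarrow> x \<in> balln n z 1" by (simp add: g_def indicator_def)
  have St_eq: "c 0 * St n a r0 g x = indicator (balln n x0 r0) x" for x
  proof -
    have ind: "(indicator (balln n z 1) (\<lambda>i. x i / r0) :: complex) = indicator (balln n x0 r0) x"
      unfolding z_def indicator_def by (simp only: ball_scale[OF r0])
    have "c 0 * St n a r0 g x = complex_of_real C0 * (complex_of_real (r0 powr (- (real n * rinv a)))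
        * (complex_of_real (1 / K) * indicator (balln n x0 r0) x))"
      unfolding c_def St_def g_def ind by simp
    also have "\<dots> = complex_of_real (C0 * (r0 powr (- (real n * rinv a)) * (1 / K))) * indicator (balln n x0 r0) x"
      by (simp only: of_real_mult mult.assoc)
    also have "C0 * (r0 powr (- (real n * rinv a)) * (1 / K)) = 1"
      unfolding C0_def using K0 r0 by (simp add: powr_minus field_simps)
    finally show ?thesis by simp
  qed
  have locint: "loc_int n g"
    unfolding loc_int_def
  proof (intro conjI allI)
    have "(\<lambda>x. g (\<lambda>i. if i < n then x i else 0)) =
        (\<lambda>x. complex_of_real (1 / K) * (if sqrt (\<Sum>i<n. (x i - z i)\<^sup>2) < 1 then 1 else 0))"
      by (auto simp: g_def indicator_def balln_def Rn_def fun_eq_iff)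
    moreover have "(\<lambda>x. complex_of_real (1 / K) * (if sqrt (\<Sum>i<n. (x i - z i)\<^sup>2) < 1 then 1 else 0))
        \<in> borel_measurable (PiM {..<n} (\<lambda>_. lborel))"
      by measurable
    ultimately show "(\<lambda>x. g (\<lambda>i. if i < n then x i else 0)) \<in> borel_measurable (PiM {..<n} (\<lambda>_. lborel))"
      by simp
  next
    fix y r
    have "mixed_Lp_norm n (\<lambda>_. 1) (\<lambda>x. g x * indicator (balln n y r) x)
       \<le> ennreal (1 / K * (2 * 1) powr (\<Sum>i<n. rinv ((\<lambda>_. 1::ennreal) i)))"
    proof (rule norm_bound)
      show "\<forall>i<n. (1::ennreal) \<le> 1" by simp
      show "0 < (1::real)" by simp
      show "0 \<le> 1 / K" using K0 by simp
      show "\<forall>x. norm (g x * indicator (balln n y r) x) \<le> 1 / K"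
        using gb K0 by (simp add: indicator_def norm_mult)
      show "\<forall>x. g x * indicator (balln n y r) x \<noteq> 0 \<longrightarrow> (\<forall>i<n. \<bar>x i - z i\<bar> \<le> 1)"
      proof (intro allI impI)
        fix x i assume h: "g x * indicator (balln n y r) x \<noteq> 0" and i: "i < n"
        then have "g x \<noteq> 0" by auto
        then have "x \<in> balln n z 1" using gs by blast
        then have "\<bar>x i - z i\<bar> < 1" using i by (rule ball_coord)
        then show "\<bar>x i - z i\<bar> \<le> 1" by simp
      qed
    qed
    then show "mixed_Lp_norm n (\<lambda>_. 1) (\<lambda>x. g x * indicator (balln n y r) x) < \<infinity>"
    proof -
      assume h: "mixed_Lp_norm n (\<lambda>_. 1) (\<lambda>x. g x * indicator (balln n y r) x)
       \<le> ennreal (1 / K * (2 * 1) powr (\<Sum>i<n. rinv ((\<lambda>_. 1::ennreal) i)))"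
      have "mixed_Lp_norm n (\<lambda>_. 1) (\<lambda>x. g x * indicator (balln n y r) x) \<noteq> \<infinity>"
        using neq_top_trans[OF ennreal_neq_top h] by fastforce
      then show ?thesis by (simp add: less_top)
    qed
  qed
  have amal: "amalgam_norm n pp ss g \<le> 1"
  proof -
    define A where "A = (\<lambda>k::nat \<Rightarrow> int. mixed_Lp_norm n pp (\<lambda>x. g x * indicator (cube1 n k) x))"
    have Ab: "\<forall>k. A k \<le> ennreal (1 / K)"
    proof
      fix k
      have "A k \<le> ennreal (1 / K * (2 * (1/2)) powr (\<Sum>i<n. rinv (pp i)))"
        unfolding A_def
      proof (rule norm_bound[where z="\<lambda>i. of_int (k i) + 1/2"])
        show "\<forall>i<n. 1 \<le> pp i" by (rule pp)
        show "0 < (1/2::real)" by simp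
        show "0 \<le> 1 / K" using K0 by simp
        show "\<forall>x. norm (g x * indicator (cube1 n k) x) \<le> 1 / K"
          using gb K0 by (simp add: indicator_def norm_mult)
        show "\<forall>x. g x * indicator (cube1 n k) x \<noteq> 0 \<longrightarrow> (\<forall>i<n. \<bar>x i - (of_int (k i) + 1/2)\<bar> \<le> 1/2)"
        proof (intro allI impI)
          fix x i assume h: "g x * indicator (cube1 n k) x \<noteq> 0" and i: "i < n"
          then have "x \<in> cube1 n k" by (auto simp: indicator_def split: if_splits)
          then have "of_int (k i) \<le> x i" "x i < of_int (k i) + 1" using i by (auto simp: cube1_def)
          then show "\<bar>x i - (of_int (k i) + 1/2)\<bar> \<le> 1/2" by (simp only: abs_le_iff) linarith
        qed
      qed
      then show "A k \<le> ennreal (1 / K)" by simp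
    qed
    define Z where "Z = (\<lambda>i. {\<lfloor>z i\<rfloor> - 1 .. \<lfloor>z i\<rfloor> + 1})"
    have As: "\<forall>k. A k \<noteq> 0 \<longrightarrow> (\<forall>i<n. k i \<in> Z i)"
    proof (intro allI impI)
      fix k i assume nz: "A k \<noteq> 0" and i: "i < n"
      have "\<exists>x. g x * indicator (cube1 n k) x \<noteq> 0"
      proof (rule ccontr)
        assume "\<not> ?thesis"
        then have Z: "\<And>x. g x * indicator (cube1 n k) x = 0" by auto
        have "A k = 0" unfolding A_def mixed_Lp_norm_def mixed_Lp_enn_def by (simp only: Z norm_zero ennreal_0 iter_zero)
        with nz show False by simp
      qed
      then obtain x where "g x * indicator (cube1 n k) x \<noteq> 0" by blast
      then have xb: "x \<in> balln n z 1" and xc: "x \<in> cube1 n k"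
        using gs by (auto simp: indicator_def split: if_splits)
      have d: "\<bar>x i - z i\<bar> < 1" using ball_coord[OF xb i] .
      have ck: "of_int (k i) \<le> x i" "x i < of_int (k i) + 1" using xc i by (auto simp: cube1_def)
      have f1: "of_int \<lfloor>z i\<rfloor> \<le> z i" "z i < of_int \<lfloor>z i\<rfloor> + 1" by linarith+
      have "real_of_int (k i) < real_of_int \<lfloor>z i\<rfloor> + 2" using d ck f1 unfolding abs_less_iff by linarith
      then have "real_of_int (k i) < real_of_int (\<lfloor>z i\<rfloor> + 2)" by simp
      then have u: "k i < \<lfloor>z i\<rfloor> + 2" by (simp only: of_int_less_iff)
      have "real_of_int (\<lfloor>z i\<rfloor>) < real_of_int (k i) + 2" using d ck f1 unfolding abs_less_iff by linarith
      then have "real_of_int (\<lfloor>z i\<rfloor>) < real_of_int (k i + 2)" by simp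
      then have l: "\<lfloor>z i\<rfloor> < k i + 2" by (simp only: of_int_less_iff)
      show "k i \<in> Z i" using u l by (simp add: Z_def)
    qed
    have L: "\<forall>i<n. 0 < (3::real) \<and> emeasure (count_space UNIV) (Z i) \<le> ennreal 3"
    proof (intro allI impI conjI)
      fix i
      have "emeasure (count_space UNIV) (Z i) = of_nat (card (Z i))"
        by (rule emeasure_count_space_finite) (auto simp: Z_def)
      also have "card (Z i) = 3" by (simp add: Z_def)
      finally show "emeasure (count_space UNIV) (Z i) \<le> ennreal 3" by simp
    qed simp
    have "\<forall>k. iter_norm (count_space UNIV) ss n A k \<le> ennreal (1 / K * (\<Prod>i<n. 3 powr rinv (ss i)))"
      using iter_upper[of n ss Z "count_space UNIV" "\<lambda>_. 3" "1 / K" A n, OF ss _ L _ Ab As] K0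
      by simp
    then have "iter_norm (count_space UNIV) ss n A (\<lambda>_. 0) \<le> ennreal (1 / K * K)"
      unfolding K_def by blast
    then show ?thesis using K0
      unfolding amalgam_norm_def mixed_lseq_norm_def A_def by simp
  qed
  have tends: "l1loc_tendsto n (\<lambda>N x. \<Sum>j<N. c j * St n a ((\<lambda>_. r0) j) ((\<lambda>_. g) j) x) (indicator (balln n x0 r0))"
    unfolding l1loc_tendsto_def
  proof (intro allI)
    fix y r
    show "((\<lambda>N. mixed_Lp_norm n (\<lambda>_. 1) (\<lambda>x. ((\<Sum>j<N. c j * St n a ((\<lambda>_. r0) j) ((\<lambda>_. g) j) x) - indicator (balln n x0 r0) x) * indicator (balln n y r) x)) \<longlongrightarrow> 0) sequentially"
    proof (rule tendsto_eventually)
      show "\<forall>\<^sub>F N in sequentially. mixed_Lp_norm n (\<lambda>_. 1) (\<lambda>x. ((\<Sum>j<N. c j * St n a ((\<lambda>_. r0) j) ((\<lambda>_. g) j) x) - indicator (balln n x0 r0) x) * indicator (balln n y r) x) = 0"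
        unfolding eventually_sequentially
      proof (intro exI allI impI)
        fix N :: nat assume N: "1 \<le> N"
        have "(\<Sum>j<N. c j * St n a r0 g x) = indicator (balln n x0 r0) x" for x
        proof -
          have "(\<Sum>j<N. c j * St n a r0 g x) = (\<Sum>j<N. if j = 0 then c 0 * St n a r0 g x else 0)"
            by (rule sum.cong) (auto simp: c_def)
          also have "\<dots> = c 0 * St n a r0 g x" using N by simp
          finally show ?thesis using St_eq by simp
        qed
        then show "mixed_Lp_norm n (\<lambda>_. 1) (\<lambda>x. ((\<Sum>j<N. c j * St n a ((\<lambda>_. r0) j) ((\<lambda>_. g) j) x) - indicator (balln n x0 r0) x) * indicator (balln n y r) x) = 0"
          unfolding mixed_Lp_norm_def mixed_Lp_enn_def by (simp add: iter_zero)
      qed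
    qed
  qed
  have mem: "ennreal (\<Sum>j. norm (c j)) \<in> {ennreal (\<Sum>j. norm (c j)) | c r g.
      summable (\<lambda>j. norm (c j))
    \<and> (\<forall>j. 0 < r j \<and> loc_int n (g j) \<and> amalgam_norm n pp ss (g j) \<le> 1)
    \<and> l1loc_tendsto n (\<lambda>N x. \<Sum>j<N. c j * St n a (r j) (g j) x) (indicator (balln n x0 r0))}"
    apply (rule CollectI)
    apply (rule exI[of _ c], rule exI[of _ "\<lambda>_. r0"], rule exI[of _ "\<lambda>_. g"])
    using sums_summable[OF csums] locint amal tends r0 by simp
  have "H_norm n pp ss a (indicator (balln n x0 r0)) \<le> ennreal (\<Sum>j. norm (c j))"
    unfolding H_norm_def by (rule Inf_lower[OF mem])
  also have "(\<Sum>j. norm (c j)) = C0" using csums by (rule sums_unique[symmetric])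
  finally show ?thesis unfolding C0_def K_def .
qed

theorem proposition7p1:
  fixes n :: nat and p s :: "nat \<Rightarrow> ennreal" and \<alpha> :: ennreal
  assumes n: "1 \<le> n"
    and p: "\<forall>i<n. 1 \<le> p i" and s: "\<forall>i<n. 1 \<le> s i"
    and \<alpha>: "0 < \<alpha>"
    and c0: "0 \<le> (\<Sum>i<n. rinv (s i)) / n"
    and c1: "(\<Sum>i<n. rinv (s i)) / n \<le> rinv \<alpha>"
    and c2: "rinv \<alpha> \<le> (\<Sum>i<n. rinv (p i)) / n"
    and c3: "(\<Sum>i<n. rinv (p i)) / n < 1"
  shows "\<exists>C>0. \<forall>x0 \<in> Rn n. \<forall>r0>0.
     morrey_norm n p s \<alpha> (indicator (balln n x0 r0))
        \<le> ennreal (C * r0 powr (real n * rinv \<alpha>))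
   \<and> H_norm n (\<lambda>i. conj_exp (p i)) (\<lambda>i. conj_exp (s i)) (conj_exp \<alpha>)
        (indicator (balln n x0 r0))
        \<le> ennreal (C * r0 powr (real n * rinv (conj_exp \<alpha>)))"
proof -
  define C1 where "C1 = (2/n) powr (n * rinv \<alpha> - (\<Sum>i<n. rinv (p i)) - (\<Sum>i<n. rinv (s i))) * 2 powr (\<Sum>i<n. rinv (p i))
       * 4 powr (\<Sum>i<n. rinv (s i))"
  define K where "K = (\<Prod>i<n. (3::real) powr rinv (conj_exp (s i)))"
  have C1p: "0 < C1" unfolding C1_def using n by simp
  have Kp: "0 < K" unfolding K_def by (intro prod_pos) auto
  show ?thesis
  proof (intro exI[of _ "C1 + K"] conjI ballI allI impI)
    show "0 < C1 + K" using C1p Kp by simp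
  next
    fix x0 :: "nat \<Rightarrow> real" and r0 :: real assume r0: "0 < r0"
    have "morrey_norm n p s \<alpha> (indicator (balln n x0 r0)) \<le> ennreal (C1 * r0 powr (real n * rinv \<alpha>))"
      unfolding C1_def by (rule morrey_bound[OF n p s r0 c1 c2])
    also have "\<dots> \<le> ennreal ((C1 + K) * r0 powr (real n * rinv \<alpha>))"
      using Kp by (intro ennreal_leI mult_right_mono) auto
    finally show "morrey_norm n p s \<alpha> (indicator (balln n x0 r0)) \<le> ennreal ((C1 + K) * r0 powr (real n * rinv \<alpha>))" .
  next
    fix x0 :: "nat \<Rightarrow> real" and r0 :: real assume r0: "0 < r0"
    have pp: "\<forall>i<n. 1 \<le> conj_exp (p i)" and ss: "\<forall>i<n. 1 \<le> conj_exp (s i)"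
      by (simp_all add: conj_exp_ge1)
    have "H_norm n (\<lambda>i. conj_exp (p i)) (\<lambda>i. conj_exp (s i)) (conj_exp \<alpha>) (indicator (balln n x0 r0))
        \<le> ennreal (K * r0 powr (real n * rinv (conj_exp \<alpha>)))"
      unfolding K_def by (rule H_bound[OF n pp ss r0])
    also have "\<dots> \<le> ennreal ((C1 + K) * r0 powr (real n * rinv (conj_exp \<alpha>)))"
      using C1p by (intro ennreal_leI mult_right_mono) auto
    finally show "H_norm n (\<lambda>i. conj_exp (p i)) (\<lambda>i. conj_exp (s i)) (conj_exp \<alpha>) (indicator (balln n x0 r0))
        \<le> ennreal ((C1 + K) * r0 powr (real n * rinv (conj_exp \<alpha>)))" .
  qed
qed

end
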